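(* Let $A=(a_{i,j})$ be an $n\times n$ matrix with indeterminate entries. Let $A'=(a'_{i,j})$ be the matrix obtained from $A$ by replacing the entries $a_{i,n}$ of its last column by entries $\tilde a_{i,n}$ (rational functions of the $a_{k,\ell}$) such that for every $1\le k\le n$ \[ \det\begin{pmatrix} a_{k,k}&\cdots&a_{k,n-1}&\tilde a_{k,n}\\ \vdots&&\vdots&\vdots\\ a_{n,k}&\cdots&a_{n,n-1}&\tilde a_{n,n}\end{pmatrix}=(-1)^{n-k}\,a_{k,n}\,\det\begin{pmatrix} a_{k+1,k}&\cdots&a_{k+1,n-1}\\ \vdots&&\vdots\\ a_{n,k}&\cdots&a_{n,n-1}\end{pmatrix}.\] Let $A''=(a''_{i,j})$ be the $n\times(n-1)$ matrix obtained from $A$ by removing its last column. Then for every $1\le i\le n-1$, \[ \frac{\det\big((a'_{k,\ell})_{k\ge i,\,k\ne i+1;\ \ell>i}\big)}{\det\big((a'_{k,\ell})_{k,\ell>i}\big)}=\frac{a_{i,n}}{a_{i+1,n}}+\frac{\det\big((a''_{k,\ell})_{k\ge i,\,k\ne i+1;\ \ell>i-1}\big)}{\det\big((a''_{k,\ell})_{k>i;\ \ell>i-1}\big)} .\]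
   Context: Submatrices are formed with the indicated row and column index sets taken in increasing order; the determinant of an empty matrix is $1$. The identities are identities of rational functions in the indeterminates $a_{i,j}$. *)

theory Defs
  imports "Jordan_Normal_Form.Determinant"
begin

text \<open>Matrices with indices 1..n are represented as functions nat => nat => 'a.
  subdet M R C is the determinant of the submatrix of M with row index set R
  and column index set C, both taken in increasing order (R, C finite, of equal
  cardinality). The determinant of the empty matrix is 1.\<close>

definition subdet :: "(nat \<Rightarrow> nat \<Rightarrow> 'a::comm_ring_1) \<Rightarrow> nat set \<Rightarrow> nat set \<Rightarrow> 'a" where
  "subdet M R C =
     (let rs = sorted_list_of_set R; cs = sorted_list_of_set C
      in det (mat (length rs) (length rs) (\<lambda>(i, j). M (rs ! i) (cs ! j))))"

definition repl_last_col :: "nat \<Rightarrow> (nat \<Rightarrow> nat \<Rightarrow> 'a) \<Rightarrow> (nat \<Rightarrow> 'a) \<Rightarrow> nat \<Rightarrow> nat \<Rightarrow> 'a" where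
  "repl_last_col n A t = (\<lambda>i j. if j = n then t i else A i j)"

text \<open>The n x (n-1) matrix A'' obtained from A by removing the last column
  (entries with column index n are set to 0 and are never used).\<close>

definition drop_last_col :: "nat \<Rightarrow> (nat \<Rightarrow> nat \<Rightarrow> 'a::zero) \<Rightarrow> nat \<Rightarrow> nat \<Rightarrow> 'a" where
  "drop_last_col n A = (\<lambda>i j. if j < n then A i j else 0)"

end

theory Submission
  imports Defs
begin

lemma det_2x2:
  assumes "P \<in> carrier_mat 2 2"
  shows "det P = P $$ (0,0) * P $$ (1,1) - P $$ (0,1) * P $$ (1,0)"
proof -
  have "det P = (\<Sum>i<2. P $$ (i,0) * cofactor P i 0)"
    by (rule laplace_expansion_column[OF assms], simp)
  also have "\<dots> = P $$ (0,0) * cofactor P 0 0 + P $$ (1,0) * cofactor P 1 0"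
    by (simp add: numeral_2_eq_2)
  also have "cofactor P 0 0 = P $$ (1,1)"
    unfolding cofactor_def using assms
    by (subst det_single[of _]) (auto simp: mat_delete_def)
  also have "cofactor P 1 0 = - P $$ (0,1)"
    unfolding cofactor_def using assms
    by (subst det_single[of _]) (auto simp: mat_delete_def)
  finally show ?thesis by (simp add: algebra_simps)
qed

lemma suc2_aux: "\<not> i < 2 \<Longrightarrow> Suc (Suc (i - 2)) = i" "\<not> i \<le> 2 \<Longrightarrow> Suc (Suc (i - 2)) = i"
  "Suc (Suc 0) = 2" by auto

definition low22 :: "'a mat \<Rightarrow> 'a mat" where
  "low22 M = mat (dim_row M - 2) (dim_col M - 2) (\<lambda>(p,q). M $$ (p+2, q+2))"

lemma dodgson_nz:
  fixes M :: "'a::idom mat"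
  assumes M: "M \<in> carrier_mat m m" and m: "2 \<le> m" and nz: "det M \<noteq> 0"
  shows "det M * det (low22 M) =
     det (mat_delete M 0 0) * det (mat_delete M 1 1) - det (mat_delete M 0 1) * det (mat_delete M 1 0)"
proof -
  define X where "X = mat m m (\<lambda>(k,l). if l = 0 then cofactor M 0 k else if l = 1 then cofactor M 1 k
     else (if k = l then 1 else 0))"
  have X: "X \<in> carrier_mat m m" unfolding X_def by auto
  have adj: "adj_mat M $$ (k, r) = cofactor M r k" if "k < m" "r < m" for k r
    using that M unfolding adj_mat_def by auto
  have MA: "M * adj_mat M = det M \<cdot>\<^sub>m 1\<^sub>m m" using adj_mat[OF M] by auto
  define P where "P = mat 2 2 (\<lambda>(k,l). X $$ (k,l))"
  define Q where "Q = mat (m-2) 2 (\<lambda>(k,l). X $$ (k+2,l))"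
  have Xb: "X = four_block_mat P (0\<^sub>m 2 (m-2)) Q (1\<^sub>m (m-2))"
    by (rule eq_matI, insert m, auto simp: X_def P_def Q_def four_block_mat_def suc2_aux)
  have detX: "det X = det P"
    by (subst Xb, subst det_four_block_mat_upper_right_zero[of _ 2 _ "m-2"], auto simp: P_def Q_def)
  have detP: "det P = det (mat_delete M 0 0) * det (mat_delete M 1 1) - det (mat_delete M 0 1) * det (mat_delete M 1 0)"
    by (subst det_2x2, simp add: P_def, insert m, auto simp: P_def X_def cofactor_def algebra_simps)
  define R where "R = mat 2 (m-2) (\<lambda>(k,l). M $$ (k,l+2))"
  have MXe: "(M * X) $$ (k,l) = (if l = 0 then (if k = 0 then det M else 0) else if l = 1 then
      (if k = 1 then det M else 0) else M $$ (k,l))" if "k < m" "l < m" for k l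
  proof -
    have "(M * X) $$ (k,l) = (\<Sum>j<m. M $$ (k,j) * X $$ (j,l))"
      using that M X by (auto simp: scalar_prod_def intro!: sum.cong)
    also have "\<dots> = (if l = 0 then (M * adj_mat M) $$ (k,0) else if l = 1 then (M * adj_mat M) $$ (k,1)
       else M $$ (k,l))"
    proof -
      have a: "(M * adj_mat M) $$ (k,r) = (\<Sum>j<m. M $$ (k,j) * cofactor M r j)" if "r < m" for r
        using that \<open>k < m\<close> M adj_mat(1)[OF M] by (auto simp: scalar_prod_def adj intro!: sum.cong)
      show ?thesis using m that a
        by (auto simp: X_def if_distrib[of "\<lambda>x. _ * x"] sum.delta' cong: if_cong)
    qed
    finally show ?thesis using MA that m by auto
  qed
  have MXb: "M * X = four_block_mat (det M \<cdot>\<^sub>m 1\<^sub>m 2) R (0\<^sub>m (m-2) 2) (low22 M)"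
  proof (rule eq_matI)
    fix k l assume kl: "k < dim_row (four_block_mat (det M \<cdot>\<^sub>m 1\<^sub>m 2) R (0\<^sub>m (m-2) 2) (low22 M))"
       "l < dim_col (four_block_mat (det M \<cdot>\<^sub>m 1\<^sub>m 2) R (0\<^sub>m (m-2) 2) (low22 M))"
    hence kl': "k < m" "l < m" using m M by (auto simp: R_def low22_def)
    show "(M * X) $$ (k,l) = four_block_mat (det M \<cdot>\<^sub>m 1\<^sub>m 2) R (0\<^sub>m (m-2) 2) (low22 M) $$ (k,l)"
      unfolding MXe[OF kl'] using kl' m M by (auto simp: R_def low22_def four_block_mat_def suc2_aux)
  qed (insert M X m, auto simp: R_def low22_def)
  have "det (M * X) = det M ^ 2 * det (low22 M)"
    by (subst MXb, subst det_four_block_mat_lower_left_zero[of _ 2 _ "m-2"],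
        insert M m, auto simp: R_def low22_def)
  moreover have "det (M * X) = det M * det P" using det_mult[OF M X] detX by simp
  ultimately have "det M * (det M * det (low22 M)) = det M * det P" by (metis power2_eq_square mult.assoc)
  hence "det M * det (low22 M) = det P" using nz by (metis mult_left_cancel)
  with detP show ?thesis by simp
qed

definition pert :: "'a::comm_ring_1 \<Rightarrow> 'a mat \<Rightarrow> 'a mat" where
  "pert s A = mat (dim_row A) (dim_col A) (\<lambda>(p,q). A $$ (p,q) + (if p = 0 \<and> q = 0 then s else 0))"

lemma det_pert:
  assumes A: "A \<in> carrier_mat n n" and n: "0 < n"
  shows "det (pert s A) = det A + s * det (mat_delete A 0 0)"
proof -
  have B: "pert s A \<in> carrier_mat n n" using A by (auto simp: pert_def)
  have md: "mat_delete (pert s A) 0 j = mat_delete A 0 j" for j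
    by (rule eq_matI, insert A, auto simp: pert_def mat_delete_def)
  have "det (pert s A) = (\<Sum>j<n. pert s A $$ (0,j) * cofactor (pert s A) 0 j)"
    by (rule laplace_expansion_row[OF B n])
  also have "\<dots> = (\<Sum>j<n. A $$ (0,j) * cofactor A 0 j + (if j = 0 then s * cofactor A 0 0 else 0))"
  proof (rule sum.cong[OF refl])
    fix j assume j: "j \<in> {..<n}"
    have cof: "cofactor (pert s A) 0 j = cofactor A 0 j" by (simp add: cofactor_def md)
    show "pert s A $$ (0,j) * cofactor (pert s A) 0 j = A $$ (0,j) * cofactor A 0 j + (if j = 0 then s * cofactor A 0 0 else 0)"
      unfolding cof using j A n by (auto simp: pert_def algebra_simps)
  qed
  also have "\<dots> = det A + s * cofactor A 0 0"
    by (simp add: sum.distrib laplace_expansion_row[OF A n] n)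
  finally show ?thesis by (simp add: cofactor_def)
qed

lemma dodgson:
  fixes M :: "'a::field mat"
  assumes M: "M \<in> carrier_mat m m" and m: "2 \<le> m" and nz: "det (mat_delete M 0 0) \<noteq> 0"
  shows "det M * det (low22 M) =
     det (mat_delete M 0 0) * det (mat_delete M 1 1) - det (mat_delete M 0 1) * det (mat_delete M 1 0)"
proof (cases "det M = 0")
  case False thus ?thesis using dodgson_nz[OF M m] by auto
next
  case True
  define M' where "M' = pert 1 M"
  have M': "M' \<in> carrier_mat m m" using M by (auto simp: M'_def pert_def)
  have dM': "det M' = det (mat_delete M 0 0)" using det_pert[OF M, of 1] m True by (simp add: M'_def)
  have e1: "mat_delete M' 0 0 = mat_delete M 0 0" "mat_delete M' 0 1 = mat_delete M 0 1"
      "mat_delete M' 1 0 = mat_delete M 1 0" "low22 M' = low22 M"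
    by (rule eq_matI, insert M, auto simp: M'_def pert_def mat_delete_def low22_def)+
  have e2: "mat_delete M' 1 1 = pert 1 (mat_delete M 1 1)"
    by (rule eq_matI, insert M m, auto simp: M'_def pert_def mat_delete_def)
  have e3: "mat_delete (mat_delete M 1 1) 0 0 = low22 M"
    by (rule eq_matI, insert M m, auto simp: mat_delete_def low22_def suc2_aux)
  have e3': "mat_delete (mat_delete M (Suc 0) (Suc 0)) 0 0 = low22 M" using e3 by simp
  have d11: "det (mat_delete M' 1 1) = det (mat_delete M 1 1) + det (low22 M)"
    unfolding e2 using M m by (subst det_pert[of _ "m-1"]) (auto simp: e3 e3' intro: mat_delete_carrier)
  have "det M' * det (low22 M') =
     det (mat_delete M' 0 0) * det (mat_delete M' 1 1) - det (mat_delete M' 0 1) * det (mat_delete M' 1 0)"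
    by (rule dodgson_nz[OF M' m], simp add: dM' nz)
  thus ?thesis unfolding e1 d11 dM' True by (simp add: algebra_simps)
qed

lemma subdet_eq:
  assumes "sorted xs" "distinct xs" "set xs = R" "sorted ys" "distinct ys" "set ys = C"
    "length xs = k" "length ys = k" "\<And>p. p < k \<Longrightarrow> xs ! p = f p" "\<And>q. q < k \<Longrightarrow> ys ! q = g q"
  shows "subdet M R C = det (mat k k (\<lambda>(p,q). M (f p) (g q)))"
proof -
  have "sorted_list_of_set R = xs" "sorted_list_of_set C = ys"
    using assms by (metis sorted_list_of_set_sort_remdups distinct_remdups_id sorted_sort_id)+
  thus ?thesis unfolding subdet_def Let_def using assms
    by (auto intro!: arg_cong[of _ _ det] eq_matI)
qed

lemma nth_gap: "p < Suc n - (i+2) + 1 \<Longrightarrow> (i # [i+2..<Suc n]) ! p = (if p = 0 then i else i + p + 1)"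
  by (cases p) (auto simp del: upt_Suc simp: nth_upt)

lemma alg:
  fixes \<sigma> :: "'a::field"
  assumes "\<sigma> * \<sigma> = 1" "dM = - \<sigma> * bi" "bi = - \<sigma> * ain * di"
    "dM * dj = di * (\<sigma> * nn) - (\<sigma> * bj) * ee" "bj = \<sigma> * a1 * dj" "bj \<noteq> 0" "a1 \<noteq> 0" "di \<noteq> 0"
  shows "nn / bj = ain / a1 + ee / di"
proof -
  have s0: "\<sigma> \<noteq> 0" using assms(1) by auto
  have dj: "dj \<noteq> 0" using assms(5,6) by auto
  have dM: "dM = ain * di" using assms(1-3)
    by (metis (no_types, lifting) minus_mult_minus mult.assoc mult_1)
  have e0: "ain * di * dj = \<sigma> * di * nn - \<sigma> * \<sigma> * a1 * dj * ee"
    using assms(4,5) dM by (simp add: algebra_simps)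
  have e: "ain * di * dj = \<sigma> * di * nn - a1 * dj * ee"
    using e0 assms(1) by (simp add: mult.assoc)
  have "\<sigma> * (ain * di * dj) = \<sigma> * \<sigma> * di * nn - \<sigma> * a1 * dj * ee" proof -
    have "\<sigma> * (ain * di * dj) = \<sigma> * (\<sigma> * di * nn - a1 * dj * ee)" using e by simp
    thus ?thesis by (simp add: algebra_simps)
  qed
  hence "nn * di = \<sigma> * ain * dj * di + \<sigma> * a1 * dj * ee"
    using assms(1) by (simp add: algebra_simps)
  thus ?thesis using assms(5-8) s0 dj by (simp add: field_simps)
qed

theorem lemma4p3:
  fixes n :: nat and a :: "nat \<Rightarrow> nat \<Rightarrow> 'a::field" and t :: "nat \<Rightarrow> 'a" and i :: nat
  assumes generic: "\<And>k. 1 \<le> k \<Longrightarrow> k \<le> n \<Longrightarrow> subdet a {k+1..n} {k..n-1} \<noteq> 0"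
    and tilde: "\<And>k. 1 \<le> k \<Longrightarrow> k \<le> n \<Longrightarrow>
       subdet (repl_last_col n a t) {k..n} {k..n}
         = (-1) ^ (n - k) * a k n * subdet a {k+1..n} {k..n-1}"
    and i: "1 \<le> i" "i \<le> n - 1"
    and den1: "a (i+1) n \<noteq> 0"
    and den2: "subdet (repl_last_col n a t) {i+1..n} {i+1..n} \<noteq> 0"
    and den3: "subdet (drop_last_col n a) {i+1..n} {i..n-1} \<noteq> 0"
  shows "subdet (repl_last_col n a t) ({i..n} - {i+1}) {i+1..n}
           / subdet (repl_last_col n a t) {i+1..n} {i+1..n}
         = a i n / a (i+1) n
           + subdet (drop_last_col n a) ({i..n} - {i+1}) {i..n-1}
             / subdet (drop_last_col n a) {i+1..n} {i..n-1}"
proof -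
  define A' where "A' = repl_last_col n a t"
  define m where "m = n - i + 1"
  have n2: "2 \<le> n" and m2: "2 \<le> m" and im: "i + m = n + 1" using i by (auto simp: m_def)
  have Am: "Suc n - i = m" "n - i = m - 1" "n - Suc i = m - 2" "Suc n - Suc i = m - 1" "Suc n - Suc (Suc i) = m - 2" using i by (auto simp: m_def)
  have L1: "\<And>p. p < m \<Longrightarrow> [i..<Suc n] ! p = i + p" using im by (simp del: upt_Suc add: nth_upt)
  have L2: "\<And>p. p < m - 1 \<Longrightarrow> [Suc i..<Suc n] ! p = i + 1 + p" using im by (simp del: upt_Suc add: nth_upt)
  have L3: "\<And>p. p < m - 1 \<Longrightarrow> [i..<n] ! p = i + p" using im by (simp del: upt_Suc add: nth_upt)
  have L4: "\<And>p. p < m - 1 \<Longrightarrow> (i # [i+2..<Suc n]) ! p = (if p = 0 then i else i + p + 1)"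
    using im by (rule_tac nth_gap) simp
  have L5: "\<And>p. p < m - 2 \<Longrightarrow> [Suc (Suc i)..<Suc n] ! p = i + 2 + p" using im by (simp del: upt_Suc add: nth_upt)
  have L6: "\<And>p. p < m - 2 \<Longrightarrow> [Suc i..<n] ! p = i + 1 + p" using im by (simp del: upt_Suc add: nth_upt)
  have S4: "set (i # [i+2..<Suc n]) = {i..n} - {i+1}" using i by auto
  have S3: "set [i..<n] = {i..n-1}" using i by auto
  have S4s: "sorted (i # [i+2..<Suc n])" "distinct (i # [i+2..<Suc n])" by (simp_all del: upt_Suc)
  have S4l: "length (i # [i+2..<Suc n]) = m - 1" using im i by (simp del: upt_Suc)
  define BI where "BI = mat m m (\<lambda>(p,q). A' (i+p) (i+q))"
  define BJ where "BJ = mat (m-1) (m-1) (\<lambda>(p,q). A' (i+1+p) (i+1+q))"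
  define NN where "NN = mat (m-1) (m-1) (\<lambda>(p,q). A' (if p = 0 then i else i+p+1) (i+1+q))"
  define DI where "DI = mat (m-1) (m-1) (\<lambda>(p,q). a (i+1+p) (i+q))"
  define EE where "EE = mat (m-1) (m-1) (\<lambda>(p,q). a (if p = 0 then i else i+p+1) (i+q))"
  define DJ where "DJ = mat (m-2) (m-2) (\<lambda>(p,q). a (i+2+p) (i+1+q))"
  have sBI: "subdet A' {i..n} {i..n} = det BI"
    unfolding BI_def
    by (rule subdet_eq[where xs="[i..<Suc n]" and ys="[i..<Suc n]"], insert i im, auto simp: Am L1 L2 L3 L5 L6 simp del: upt_Suc)
  have sBJ: "subdet A' {i+1..n} {i+1..n} = det BJ"
    unfolding BJ_def
    by (rule subdet_eq[where xs="[Suc i..<Suc n]" and ys="[Suc i..<Suc n]"], insert i im, auto simp: Am L1 L2 L3 L5 L6 simp del: upt_Suc)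
  have sN: "subdet A' ({i..n} - {i+1}) {i+1..n} = det NN"
    unfolding NN_def
    apply (rule subdet_eq[where xs="i # [i+2..<Suc n]" and ys="[Suc i..<Suc n]"])
    using S4 S4s S4l L2 L4 Am by (simp_all add: atLeastLessThanSuc_atLeastAtMost del: upt_Suc)
  have sDI: "subdet a {i+1..n} {i..n-1} = det DI"
    unfolding DI_def
    by (rule subdet_eq[where xs="[Suc i..<Suc n]" and ys="[i..<n]"], insert i im, auto simp: Am L1 L2 L3 L5 L6 simp del: upt_Suc)
  have sDI': "subdet (drop_last_col n a) {i+1..n} {i..n-1} = det DI"
  proof -
    have "subdet (drop_last_col n a) {i+1..n} {i..n-1} = det (mat (m-1) (m-1) (\<lambda>(p,q). drop_last_col n a (i+1+p) (i+q)))"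
      by (rule subdet_eq[where xs="[Suc i..<Suc n]" and ys="[i..<n]"], insert i im, auto simp: Am L1 L2 L3 L5 L6 simp del: upt_Suc)
    also have "mat (m-1) (m-1) (\<lambda>(p,q). drop_last_col n a (i+1+p) (i+q)) = DI"
      by (rule eq_matI, insert i im, auto simp: DI_def drop_last_col_def Am)
    finally show ?thesis .
  qed
  have sE: "subdet (drop_last_col n a) ({i..n} - {i+1}) {i..n-1} = det EE"
  proof -
    have "subdet (drop_last_col n a) ({i..n} - {i+1}) {i..n-1} = det (mat (m-1) (m-1) (\<lambda>(p,q). drop_last_col n a (if p = 0 then i else i+p+1) (i+q)))"
      apply (rule subdet_eq[where xs="i # [i+2..<Suc n]" and ys="[i..<n]"])
      using S4 S4s S4l L3 L4 Am i by (simp_all add: atLeastLessThanSuc_atLeastAtMost S3 del: upt_Suc set_upt)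
    also have "mat (m-1) (m-1) (\<lambda>(p,q). drop_last_col n a (if p = 0 then i else i+p+1) (i+q)) = EE"
      by (rule eq_matI, insert i im, auto simp: EE_def drop_last_col_def Am)
    finally show ?thesis .
  qed
  have sDJ: "subdet a {i+1+1..n} {i+1..n-1} = det DJ"
    unfolding DJ_def
    by (rule subdet_eq[where xs="[Suc (Suc i)..<Suc n]" and ys="[Suc i..<n]"], insert i im, auto simp: Am L1 L2 L3 L5 L6 simp del: upt_Suc)
  have BIc: "BI \<in> carrier_mat m m" "NN \<in> carrier_mat (m-1) (m-1)" "BJ \<in> carrier_mat (m-1) (m-1)"
    by (auto simp: BI_def NN_def BJ_def)
  define M where "M = swap_col_to_front BI (m-1)"
  have Mc: "M \<in> carrier_mat m m" using BIc m2 by (simp add: M_def swap_col_to_front_result)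
  have detM: "det M = (-1)^(m-1) * det BI" unfolding M_def
    by (rule swap_col_to_front_det[OF BIc(1)], insert m2, auto)
  have Me: "M $$ (p,q) = A' (i+p) (if q = 0 then n else i+q-1)" if "p < m" "q < m" for p q
    using that m2 im unfolding M_def by (subst swap_col_to_front_result[OF BIc(1)], auto simp: BI_def)
  have A'a: "A' x y = a x y" if "y < n" for x y using that by (simp add: A'_def repl_last_col_def)
  have e00: "mat_delete M 0 0 = DI"
    by (rule eq_matI, insert Mc m2 im, auto simp: mat_delete_def Me DI_def A'a)
  have e10: "mat_delete M 1 0 = EE"
    by (rule eq_matI, insert Mc m2 im, auto simp: mat_delete_def Me EE_def A'a)
  have e22: "low22 M = DJ"
    by (rule eq_matI, insert Mc m2 im, auto simp: low22_def Me DJ_def A'a)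
  have e11: "mat_delete M 1 1 = swap_col_to_front NN (m-2)"
    by (subst swap_col_to_front_result[OF BIc(2)], insert m2, simp,
        rule eq_matI, insert Mc m2 im, auto simp: mat_delete_def Me NN_def)
  have e01: "mat_delete M 0 1 = swap_col_to_front BJ (m-2)"
    by (subst swap_col_to_front_result[OF BIc(3)], insert m2, simp,
        rule eq_matI, insert Mc m2 im, auto simp: mat_delete_def Me BJ_def)
  have d11: "det (mat_delete M 1 1) = (-1)^(m-2) * det NN"
    unfolding e11 by (rule swap_col_to_front_det[OF BIc(2)], insert m2, auto)
  have d01: "det (mat_delete M 0 1) = (-1)^(m-2) * det BJ"
    unfolding e01 by (rule swap_col_to_front_det[OF BIc(3)], insert m2, auto)
  have DInz: "det DI \<noteq> 0" using generic[of i] i sDI by auto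
  have dod: "det M * det DJ = det DI * ((-1)^(m-2) * det NN) - ((-1)^(m-2) * det BJ) * det EE"
    using dodgson[OF Mc m2] DInz unfolding e00 e10 e22 d11 d01 by simp
  have t1: "det BI = (-1)^(m-1) * a i n * det DI"
    using tilde[of i] i sBI sDI Am unfolding A'_def by simp
  have t2: "det BJ = (-1)^(m-2) * a (i+1) n * det DJ"
    using tilde[of "i+1"] i sBJ sDJ Am unfolding A'_def by simp
  have sig: "(-1::'a)^(m-1) = - ((-1)^(m-2))" using m2
  proof -
    have "m - 1 = Suc (m - 2)" using m2 by simp
    thus ?thesis by simp
  qed
  have ss: "(-1::'a)^(m-2) * (-1)^(m-2) = 1" by (simp add: power_mult_distrib[symmetric])
  show ?thesis
    unfolding A'_def[symmetric] sN sBJ sE sDI'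
    by (rule alg[OF ss, where dM="det M" and bi="det BI" and dj="det DJ"],
        insert detM t1 t2 dod den1 den2 DInz sig sBJ, auto simp: A'_def)
qed

end
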